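(* Let $P=\{(u_1,v_1),\ldots,(u_n,v_n)\}\subseteq\{a,b\}^*\times\{a,b\}^*$ with $n\ge 3$, and let $W\subseteq F(\Gamma)\times F(\Gamma)$ be the set of pairs constructed from $P$ as described in the context. If $P$ has a solution as an instance of Restricted PCP, then $W$ has a solution as an instance of the Identity Correspondence Problem, i.e. there is a nonempty finite sequence of pairs from $W$ whose componentwise product in $F(\Gamma)\times F(\Gamma)$ equals $(\varepsilon,\varepsilon)$.
   Context: For a set $H$, $F(H)$ denotes the free group on $H$; $\varepsilon$ is its identity (the empty word), and pairs of elements of free groups are multiplied componentwise. Restricted PCP: given $P=\{(u_1,v_1),\ldots,(u_n,v_n)\}\subseteq\{a,b\}^*\times\{a,b\}^*$ with $n\ge3$, a solution is a finite (possibly empty) sequence $l_1,\ldots,l_k$ with $2\le l_i\le n-1$ such that $u_1u_{l_1}\cdots u_{l_k}u_n=v_1v_{l_1}\cdots v_{l_k}v_n$. Construction of $W$. Let $\Gamma_i=\{a_i,b_i\}$ for $1\le i\le4$ and $\Gamma_B=\{x_1,\ldots,x_8\}$ be pairwise disjoint sets of letters, and $\Gamma=\Gamma_1\cup\Gamma_2\cup\Gamma_3\cup\Gamma_4\cup\Gamma_B$. Let $\delta_i:F(\{a,b\})\to F(\Gamma_i)$ be the homomorphism with $\delta_i(a)=a_i$, $\delta_i(b)=b_i$, and set $u_{ik}=\delta_i(u_k)$, $v_{ik}=\delta_i(v_k)$. For a positive integer $j$ let $\phi_i(j)=a_i^jb_i$ and $\psi_i(j)=(a_i^{-1})^jb_i^{-1}$.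 Put $x_0:=x_8$. For $p=1,2,3,4$ define $W_{4(p-1)}=\{(x_{2p-2}\,v_{p1}^{-1}u_{p1}\,x_{2p-1}^{-1},\; x_{2p-2}\,b_p\,x_{2p-1}^{-1})\}$, $W_{4(p-1)+1}=\{(x_{2p-1}\,u_{pj}\,x_{2p-1}^{-1},\; x_{2p-1}\,\phi_p(j)\,x_{2p-1}^{-1}) : 2\le j\le n-1\}$, $W_{4(p-1)+2}=\{(x_{2p-1}\,u_{pn}v_{pn}^{-1}\,x_{2p}^{-1},\; x_{2p-1}\,b_p^{-1}\,x_{2p}^{-1})\}$, $W_{4(p-1)+3}=\{(x_{2p}\,v_{pj}^{-1}\,x_{2p}^{-1},\; x_{2p}\,\psi_p(j)\,x_{2p}^{-1}) : 2\le j\le n-1\}$, and $W=W_0\cup W_1\cup\cdots\cup W_{15}$ (a set of $8(n-1)$ pairs). *)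

theory Defs
  imports Main
begin

text \<open>A letter of a free group word is a generator with a sign: (True, g) is g,
 (False, g) is g^-1. Elements of the free group F(H) are the reduced words over H;
 the identity is the empty word.\<close>

type_synonym 'g fword = "(bool \<times> 'g) list"

definition inv_letter :: "bool \<times> 'g \<Rightarrow> bool \<times> 'g" where
  "inv_letter x = (\<not> fst x, snd x)"

fun fred :: "'g fword \<Rightarrow> 'g fword" where
  "fred [] = []"
| "fred (x # xs) = (case fred xs of [] \<Rightarrow> [x]
      | y # ys \<Rightarrow> (if y = inv_letter x then ys else x # y # ys))"

definition reduced :: "'g fword \<Rightarrow> bool" where
  "reduced w \<longleftrightarrow> (\<forall>i. Suc i < length w \<longrightarrow> w ! Suc i \<noteq> inv_letter (w ! i))"

definition free_group :: "'g set \<Rightarrow> 'g fword set" where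
  "free_group H = {w. reduced w \<and> snd ` set w \<subseteq> H}"

definition fmult :: "'g fword \<Rightarrow> 'g fword \<Rightarrow> 'g fword" where
  "fmult u v = fred (u @ v)"

definition finv :: "'g fword \<Rightarrow> 'g fword" where
  "finv w = rev (map inv_letter w)"

definition fprod :: "'g fword list \<Rightarrow> 'g fword" where
  "fprod ws = foldr fmult ws []"

definition fgen :: "'g \<Rightarrow> 'g fword" where
  "fgen g = [(True, g)]"

datatype ab = a | b

datatype gam = GA nat | GB nat | GX nat

definition Gamma :: "gam set" where
  "Gamma = {GA i | i. i \<in> {1..4}} \<union> {GB i | i. i \<in> {1..4}} \<union> {GX k | k. k \<in> {1..8}}"

definition delta :: "nat \<Rightarrow> ab list \<Rightarrow> gam fword" where
  "delta i w = map (\<lambda>c. (True, case c of a \<Rightarrow> GA i | b \<Rightarrow> GB i)) w"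

definition xg :: "nat \<Rightarrow> gam fword" where
  "xg k = fgen (GX (if k = 0 then 8 else k))"

definition phi :: "nat \<Rightarrow> nat \<Rightarrow> gam fword" where
  "phi i j = replicate j (True, GA i) @ [(True, GB i)]"

definition psi :: "nat \<Rightarrow> nat \<Rightarrow> gam fword" where
  "psi i j = replicate j (False, GA i) @ [(False, GB i)]"

definition Wset :: "nat \<Rightarrow> (nat \<Rightarrow> ab list) \<Rightarrow> (nat \<Rightarrow> ab list) \<Rightarrow> (gam fword \<times> gam fword) set" where
  "Wset n u v = (\<Union>p\<in>{1..4::nat}.
     {(fprod [xg (2*p-2), finv (delta p (v 1)), delta p (u 1), finv (xg (2*p-1))],
       fprod [xg (2*p-2), fgen (GB p), finv (xg (2*p-1))])}
   \<union> {(fprod [xg (2*p-1), delta p (u j), finv (xg (2*p-1))],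
       fprod [xg (2*p-1), phi p j, finv (xg (2*p-1))]) | j. 2 \<le> j \<and> j \<le> n - 1}
   \<union> {(fprod [xg (2*p-1), delta p (u n), finv (delta p (v n)), finv (xg (2*p))],
       fprod [xg (2*p-1), finv (fgen (GB p)), finv (xg (2*p))])}
   \<union> {(fprod [xg (2*p), finv (delta p (v j)), finv (xg (2*p))],
       fprod [xg (2*p), psi p j, finv (xg (2*p))]) | j. 2 \<le> j \<and> j \<le> n - 1})"

definition rpcp_solution :: "nat \<Rightarrow> (nat \<Rightarrow> ab list) \<Rightarrow> (nat \<Rightarrow> ab list) \<Rightarrow> nat list \<Rightarrow> bool" where
  "rpcp_solution n u v ls \<longleftrightarrow> (\<forall>l\<in>set ls. 2 \<le> l \<and> l \<le> n - 1) \<and>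
     u 1 @ concat (map u ls) @ u n = v 1 @ concat (map v ls) @ v n"

definition icp_solution :: "('g fword \<times> 'g fword) set \<Rightarrow> ('g fword \<times> 'g fword) list \<Rightarrow> bool" where
  "icp_solution W ps \<longleftrightarrow> ps \<noteq> [] \<and> set ps \<subseteq> W \<and>
     fprod (map fst ps) = [] \<and> fprod (map snd ps) = []"

end

theory Submission imports Defs begin

lemma inv_inv[simp]: "inv_letter (inv_letter x) = x"
  by (simp add: inv_letter_def)

lemma reduced_Nil[simp]: "reduced []" and reduced_single[simp]: "reduced [x]"
  by (auto simp: reduced_def)

lemma reduced_Cons2: "reduced (x # y # ys) \<longleftrightarrow> y \<noteq> inv_letter x \<and> reduced (y # ys)"
  unfolding reduced_def
  apply (auto simp: nth_Cons split: nat.splits)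
  done

lemma reduced_tl: "reduced (y # ys) \<Longrightarrow> reduced ys"
  by (cases ys) (auto simp: reduced_Cons2)

lemma reduced_fred: "reduced (fred xs)"
proof (induction xs)
  case Nil then show ?case by simp
next
  case (Cons x xs)
  then show ?case
    by (auto split: list.splits simp: reduced_Cons2 dest: reduced_tl)
qed

lemma fred_reduced: "reduced w \<Longrightarrow> fred w = w"
proof (induction w)
  case Nil then show ?case by simp
next
  case (Cons x w)
  then show ?case
    by (cases w) (auto simp: reduced_Cons2 dest: reduced_tl)
qed

lemma fred_idem[simp]: "fred (fred w) = fred w"
  by (simp add: fred_reduced reduced_fred)

lemma fred_app_right: "fred (xs @ fred ys) = fred (xs @ ys)"
  by (induction xs) auto

lemma fred_cancel: "fred (x # inv_letter x # ys) = fred ys"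
proof -
  have r: "reduced (fred ys)" by (rule reduced_fred)
  show ?thesis
  proof (cases "fred ys")
    case Nil then show ?thesis by simp
  next
    case (Cons y zs)
    show ?thesis
    proof (cases "y = x")
      case True
      then show ?thesis using Cons r
        by (cases zs) (auto simp: reduced_Cons2)
    next
      case False
      then have "y \<noteq> inv_letter (inv_letter x)" by simp
      then show ?thesis using Cons False by (auto simp: inv_letter_def)
    qed
  qed
qed

lemma fred_cancel_ctx: "fred (xs @ x # inv_letter x # ys) = fred (xs @ ys)"
  by (metis fred_app_right fred_cancel)

lemma fred_app_left: "fred (fred xs @ ys) = fred (xs @ ys)"
proof (induction xs arbitrary: ys)
  case Nil then show ?case by simp
next
  case (Cons x xs)
  have "fred (x # xs @ ys) = fred (x # fred (xs @ ys))"
    using fred_app_right[of "[x]"] by simp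
  also have "\<dots> = fred (x # fred xs @ ys)"
    using Cons.IH fred_app_right[of "[x]"] by simp
  also have "\<dots> = fred (fred (x # xs) @ ys)"
  proof (cases "fred xs")
    case Nil then show ?thesis by simp
  next
    case (Cons y zs)
    then show ?thesis
      using fred_cancel[of x "zs @ ys"] by auto
  qed
  finally show ?case by simp
qed

lemma fred_cong: "fred w = fred w' \<Longrightarrow> fred (xs @ w @ ys) = fred (xs @ w' @ ys)"
  by (metis fred_app_left fred_app_right)

lemma fred_ctx: "fred (xs @ fred w @ ys) = fred (xs @ w @ ys)"
  by (rule fred_cong) simp

lemma finv_Cons: "finv (x # w) = finv w @ [inv_letter x]"
  by (simp add: finv_def)

lemma finv_app: "finv (u @ w) = finv w @ finv u"
  by (simp add: finv_def)

lemma finv_finv[simp]: "finv (finv w) = w"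
  by (simp add: finv_def rev_map comp_def)

lemma fred_cancel_w: "fred (xs @ w @ finv w @ ys) = fred (xs @ ys)"
proof (induction w arbitrary: xs ys)
  case Nil then show ?case by (simp add: finv_def)
next
  case (Cons x w)
  have "fred (xs @ (x # w) @ finv (x # w) @ ys) = fred ((xs @ [x]) @ w @ finv w @ (inv_letter x # ys))"
    by (simp add: finv_Cons)
  also have "\<dots> = fred (xs @ x # inv_letter x # ys)" using Cons.IH[of "xs @ [x]" "inv_letter x # ys"] by simp
  finally show ?case using fred_cancel_ctx by simp
qed

lemma fred_cancel_w': "fred (xs @ finv w @ w @ ys) = fred (xs @ ys)"
  using fred_cancel_w[of xs "finv w" ys] by simp

lemma fprod_fred: "fprod ws = fred (concat ws)"
  by (induction ws) (auto simp: fprod_def fmult_def fred_app_right)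

lemma fred_map_ctx: "fred (xs @ concat (map (\<lambda>j. fred (F j)) ls) @ ys) = fred (xs @ concat (map F ls) @ ys)"
proof (induction ls arbitrary: xs)
  case Nil then show ?case by simp
next
  case (Cons l ls)
  have "fred (xs @ concat (map (\<lambda>j. fred (F j)) (l # ls)) @ ys)
     = fred (xs @ fred (F l) @ (concat (map (\<lambda>j. fred (F j)) ls) @ ys))" by simp
  also have "\<dots> = fred ((xs @ F l) @ concat (map (\<lambda>j. fred (F j)) ls) @ ys)" 
    by (simp add: fred_ctx)
  also have "\<dots> = fred ((xs @ F l) @ concat (map F ls) @ ys)" by (rule Cons.IH)
  finally show ?case by simp
qed

lemma conj_list: "fred (xs @ finv g @ concat (map (\<lambda>j. g @ h j @ finv g) ms) @ ys)
   = fred (xs @ concat (map h ms) @ finv g @ ys)"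
proof (induction ms arbitrary: xs)
  case Nil then show ?case by simp
next
  case (Cons m ms)
  have "fred (xs @ finv g @ concat (map (\<lambda>j. g @ h j @ finv g) (m # ms)) @ ys)
      = fred (xs @ finv g @ g @ (h m @ finv g @ concat (map (\<lambda>j. g @ h j @ finv g) ms) @ ys))"
    by simp
  also have "\<dots> = fred ((xs @ h m) @ finv g @ concat (map (\<lambda>j. g @ h j @ finv g) ms) @ ys)"
    by (simp add: fred_cancel_w')
  also have "\<dots> = fred ((xs @ h m) @ concat (map h ms) @ finv g @ ys)" by (rule Cons.IH)
  finally show ?case by simp
qed

lemma block_gen:
  "fred (xs @ fred (g0 @ A @ finv g1) @ concat (map (\<lambda>j. fred (g1 @ f j @ finv g1)) ls)
      @ fred (g1 @ C @ finv g2) @ concat (map (\<lambda>j. fred (g2 @ h j @ finv g2)) (rev ls)) @ ys)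
   = fred (xs @ g0 @ (A @ concat (map f ls) @ C @ concat (map h (rev ls))) @ finv g2 @ ys)"
proof -
  have "fred (xs @ fred (g0 @ A @ finv g1) @ concat (map (\<lambda>j. fred (g1 @ f j @ finv g1)) ls)
      @ fred (g1 @ C @ finv g2) @ concat (map (\<lambda>j. fred (g2 @ h j @ finv g2)) (rev ls)) @ ys)
    = fred (xs @ (g0 @ A @ finv g1) @ concat (map (\<lambda>j. fred (g1 @ f j @ finv g1)) ls)
      @ fred (g1 @ C @ finv g2) @ concat (map (\<lambda>j. fred (g2 @ h j @ finv g2)) (rev ls)) @ ys)"
    by (rule fred_ctx)
  also have "\<dots> = fred ((xs @ g0 @ A) @ finv g1 @ concat (map (\<lambda>j. g1 @ f j @ finv g1) ls)
      @ (fred (g1 @ C @ finv g2) @ concat (map (\<lambda>j. fred (g2 @ h j @ finv g2)) (rev ls)) @ ys))"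
    using fred_map_ctx[of "xs @ g0 @ A @ finv g1" "\<lambda>j. g1 @ f j @ finv g1"] by simp
  also have "\<dots> = fred ((xs @ g0 @ A) @ concat (map f ls) @ finv g1 @
      (fred (g1 @ C @ finv g2) @ concat (map (\<lambda>j. fred (g2 @ h j @ finv g2)) (rev ls)) @ ys))"
    by (rule conj_list)
  also have "\<dots> = fred ((xs @ g0 @ A @ concat (map f ls) @ finv g1) @
      (g1 @ C @ finv g2) @ (concat (map (\<lambda>j. fred (g2 @ h j @ finv g2)) (rev ls)) @ ys))"
    using fred_ctx by (metis append.assoc)
  also have "\<dots> = fred ((xs @ g0 @ A @ concat (map f ls) @ C) @ finv g2 @
      concat (map (\<lambda>j. g2 @ h j @ finv g2) (rev ls)) @ ys)"
    using fred_map_ctx[of "xs @ g0 @ A @ concat (map f ls) @ finv g1 @ g1 @ C @ finv g2" "\<lambda>j. g2 @ h j @ finv g2"]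
      fred_cancel_w'[of "xs @ g0 @ A @ concat (map f ls)" g1]
    by simp
  also have "\<dots> = fred ((xs @ g0 @ A @ concat (map f ls) @ C) @ concat (map h (rev ls)) @ finv g2 @ ys)"
    by (rule conj_list)
  finally show ?thesis by simp
qed

lemma delta_app: "delta p (x @ y) = delta p x @ delta p y"
  by (simp add: delta_def)

lemma delta_concat: "delta p (concat (map u ls)) = concat (map (\<lambda>j. delta p (u j)) ls)"
  by (induction ls) (auto simp: delta_def)

lemma finv_concat: "finv (concat (map F ls)) = concat (map (\<lambda>j. finv (F j)) (rev ls))"
  by (induction ls) (auto simp: finv_def)

lemma list_shift: "concat (map (\<lambda>j. c # r j) ms) @ [c] = c # concat (map (\<lambda>j. r j @ [c]) ms)"
  by (induction ms) auto

definition W0 :: "nat \<Rightarrow> (nat \<Rightarrow> ab list) \<Rightarrow> (nat \<Rightarrow> ab list) \<Rightarrow> nat \<Rightarrow> gam fword \<times> gam fword" where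
 "W0 n u v p = (fprod [xg (2*p-2), finv (delta p (v 1)), delta p (u 1), finv (xg (2*p-1))],
       fprod [xg (2*p-2), fgen (GB p), finv (xg (2*p-1))])"
definition W1 :: "nat \<Rightarrow> (nat \<Rightarrow> ab list) \<Rightarrow> (nat \<Rightarrow> ab list) \<Rightarrow> nat \<Rightarrow> nat \<Rightarrow> gam fword \<times> gam fword" where
 "W1 n u v p j = (fprod [xg (2*p-1), delta p (u j), finv (xg (2*p-1))],
       fprod [xg (2*p-1), phi p j, finv (xg (2*p-1))])"
definition W2 :: "nat \<Rightarrow> (nat \<Rightarrow> ab list) \<Rightarrow> (nat \<Rightarrow> ab list) \<Rightarrow> nat \<Rightarrow> gam fword \<times> gam fword" where
 "W2 n u v p = (fprod [xg (2*p-1), delta p (u n), finv (delta p (v n)), finv (xg (2*p))],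
       fprod [xg (2*p-1), finv (fgen (GB p)), finv (xg (2*p))])"
definition W3 :: "nat \<Rightarrow> (nat \<Rightarrow> ab list) \<Rightarrow> (nat \<Rightarrow> ab list) \<Rightarrow> nat \<Rightarrow> nat \<Rightarrow> gam fword \<times> gam fword" where
 "W3 n u v p j = (fprod [xg (2*p), finv (delta p (v j)), finv (xg (2*p))],
       fprod [xg (2*p), psi p j, finv (xg (2*p))])"

definition block where
 "block n u v ls p = [W0 n u v p] @ map (W1 n u v p) ls @ [W2 n u v p] @ map (W3 n u v p) (rev ls)"

lemma block_in:
  assumes "p \<in> {1..4}" "\<forall>l\<in>set ls. 2 \<le> l \<and> l \<le> n - 1"
  shows "set (block n u v ls p) \<subseteq> Wset n u v"
proof -
  have "W0 n u v p \<in> Wset n u v" unfolding Wset_def W0_def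
    by (rule UN_I[OF assms(1)]) blast
  moreover have "W2 n u v p \<in> Wset n u v" unfolding Wset_def W2_def
    by (rule UN_I[OF assms(1)]) blast
  moreover have "W1 n u v p j \<in> Wset n u v" if "j \<in> set ls" for j unfolding Wset_def W1_def
    by (rule UN_I[OF assms(1)]) (use that assms(2) in blast)
  moreover have "W3 n u v p j \<in> Wset n u v" if "j \<in> set ls" for j unfolding Wset_def W3_def
    by (rule UN_I[OF assms(1)]) (use that assms(2) in blast)
  ultimately show ?thesis by (auto simp: block_def)
qed

lemma block_fst:
  assumes eq: "u 1 @ concat (map u ls) @ u n = v 1 @ concat (map v ls) @ v n"
  shows "fred (xs @ concat (map fst (block n u v ls p)) @ ys) = fred (xs @ xg (2*p-2) @ finv (xg (2*p)) @ ys)"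
proof -
  let ?M = "(finv (delta p (v 1)) @ delta p (u 1)) @ concat (map (\<lambda>j. delta p (u j)) ls)
     @ (delta p (u n) @ finv (delta p (v n))) @ concat (map (\<lambda>j. finv (delta p (v j))) (rev ls))"
  have "fred (xs @ concat (map fst (block n u v ls p)) @ ys) = fred (xs @ xg (2*p-2) @ ?M @ finv (xg (2*p)) @ ys)"
    using block_gen[of xs "xg (2*p-2)" "finv (delta p (v 1)) @ delta p (u 1)" "xg (2*p-1)"
       "\<lambda>j. delta p (u j)" ls "delta p (u n) @ finv (delta p (v n))" "xg (2*p)" "\<lambda>j. finv (delta p (v j))" ys]
    by (simp add: block_def W0_def W1_def W2_def W3_def fprod_fred comp_def)
  also have "\<dots> = fred ((xs @ xg (2*p-2)) @ ?M @ (finv (xg (2*p)) @ ys))" by simp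
  also have "\<dots> = fred ((xs @ xg (2*p-2)) @ [] @ (finv (xg (2*p)) @ ys))"
  proof (rule fred_cong)
    let ?V = "delta p (concat (map v ls))"
    have "delta p (u 1) @ concat (map (\<lambda>j. delta p (u j)) ls) @ delta p (u n)
        = delta p (v 1) @ ?V @ delta p (v n)"
      using arg_cong[OF eq, of "delta p"] by (simp add: delta_app delta_concat)
    then have "?M = finv (delta p (v 1)) @ delta p (v 1) @ ?V @ delta p (v n) @ finv (delta p (v n)) @ finv ?V"
      by (simp add: finv_concat delta_concat)
    then show "fred ?M = fred []"
      using fred_cancel_w'[of "[]" "delta p (v 1)"] fred_cancel_w[of "?V" "delta p (v n)"]
        fred_cancel_w[of "[]" ?V "[]"]
      by simp
  qed
  finally show ?thesis by simp
qed

lemma psi_eq: "psi p = (\<lambda>j. replicate j (False, GA p) @ [(False, GB p)])"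
  by (rule ext) (simp add: psi_def)

lemma block_snd:
  shows "fred (xs @ concat (map snd (block n u v ls p)) @ ys) = fred (xs @ xg (2*p-2) @ finv (xg (2*p)) @ ys)"
proof -
  let ?M = "fgen (GB p) @ concat (map (phi p) ls)
     @ finv (fgen (GB p)) @ concat (map (psi p) (rev ls))"
  have "fred (xs @ concat (map snd (block n u v ls p)) @ ys) = fred (xs @ xg (2*p-2) @ ?M @ finv (xg (2*p)) @ ys)"
    using block_gen[of xs "xg (2*p-2)" "fgen (GB p)" "xg (2*p-1)"
       "phi p" ls "finv (fgen (GB p))" "xg (2*p)" "psi p" ys]
    by (simp add: block_def W0_def W1_def W2_def W3_def fprod_fred comp_def)
  also have "\<dots> = fred ((xs @ xg (2*p-2)) @ ?M @ (finv (xg (2*p)) @ ys))" by simp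
  also have "\<dots> = fred ((xs @ xg (2*p-2)) @ [] @ (finv (xg (2*p)) @ ys))"
  proof (rule fred_cong)
    let ?P = "fgen (GB p) @ concat (map (phi p) ls)"
    have fp: "finv (phi p j) = (False, GB p) # replicate j (False, GA p)" for j
      by (simp add: finv_def phi_def inv_letter_def)
    have "finv ?P = concat (map (\<lambda>j. (False, GB p) # replicate j (False, GA p)) (rev ls)) @ [(False, GB p)]"
      by (simp only: finv_app finv_concat fp) (simp add: fgen_def finv_def inv_letter_def)
    also have "\<dots> = finv (fgen (GB p)) @ concat (map (psi p) (rev ls))"
      by (simp add: list_shift psi_eq fgen_def finv_def inv_letter_def)
    finally have "?M = ?P @ finv ?P" by simp
    then show "fred ?M = fred []"
      using fred_cancel_w[of "[]" ?P "[]"] by simp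
  qed
  finally show ?thesis by simp
qed

lemma chain:
  assumes h: "\<And>xs ys p. fred (xs @ concat (map F (B p)) @ ys) = fred (xs @ xg (2*p-2) @ finv (xg (2*p)) @ ys)"
  shows "fred (concat (map F (B 1 @ B 2 @ B 3 @ B 4))) = []"
proof -
  have "fred (concat (map F (B 1 @ B 2 @ B 3 @ B 4)))
    = fred ([] @ concat (map F (B 1)) @ (concat (map F (B 2)) @ concat (map F (B 3)) @ concat (map F (B 4))))"
    by simp
  also have "\<dots> = fred ((xg 0 @ finv (xg 2)) @ concat (map F (B 2)) @ (concat (map F (B 3)) @ concat (map F (B 4))))"
    using h[of "[]" 1 "concat (map F (B 2)) @ concat (map F (B 3)) @ concat (map F (B 4))"] by simp
  also have "\<dots> = fred ((xg 0 @ finv (xg 2) @ xg 2 @ finv (xg 4)) @ concat (map F (B 3)) @ concat (map F (B 4)))"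
    using h[of "xg 0 @ finv (xg 2)" 2 "concat (map F (B 3)) @ concat (map F (B 4))"] by simp
  also have "\<dots> = fred ((xg 0 @ finv (xg 2) @ xg 2 @ finv (xg 4) @ xg 4 @ finv (xg 6)) @ concat (map F (B 4)) @ [])"
    using h[of "xg 0 @ finv (xg 2) @ xg 2 @ finv (xg 4)" 3 "concat (map F (B 4))"] by simp
  also have "\<dots> = fred (xg 0 @ finv (xg 2) @ xg 2 @ finv (xg 4) @ xg 4 @ finv (xg 6) @ xg 6 @ finv (xg 8))"
    using h[of "xg 0 @ finv (xg 2) @ xg 2 @ finv (xg 4) @ xg 4 @ finv (xg 6)" 4 "[]"] by simp
  also have "\<dots> = fred (xg 0 @ finv (xg 8))"
    using fred_cancel_w'[of "xg 0" "xg 2"] fred_cancel_w'[of "xg 0" "xg 4"] fred_cancel_w'[of "xg 0" "xg 6"]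
    by simp
  also have "\<dots> = []"
    using fred_cancel_w[of "[]" "xg 8" "[]"] by (simp add: xg_def)
  finally show ?thesis .
qed

theorem mainTheorem1:
  fixes n :: nat and u v :: "nat \<Rightarrow> ab list"
  assumes "n \<ge> 3"
    and "\<exists>ls. rpcp_solution n u v ls"
  shows "\<exists>ps. icp_solution (Wset n u v) ps"
proof -
  obtain ls where ls: "rpcp_solution n u v ls" using assms(2) by blast
  have rng: "\<forall>l\<in>set ls. 2 \<le> l \<and> l \<le> n - 1" and eq: "u 1 @ concat (map u ls) @ u n = v 1 @ concat (map v ls) @ v n"
    using ls unfolding rpcp_solution_def by blast+
  let ?B = "block n u v ls"
  let ?ps = "?B 1 @ ?B 2 @ ?B 3 @ ?B 4"
  have f1: "set ?ps \<subseteq> Wset n u v"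
    unfolding set_append by (intro Un_least block_in[OF _ rng]; simp)
  have f2: "?ps \<noteq> []" by (simp add: block_def)
  have f3: "fprod (map fst ?ps) = []"
    unfolding fprod_fred
    by (rule chain[of fst ?B, OF block_fst[OF eq]])
  have f4: "fprod (map snd ?ps) = []"
    unfolding fprod_fred
    by (rule chain[of snd ?B, OF block_snd])
  have "icp_solution (Wset n u v) ?ps"
    unfolding icp_solution_def using f1 f2 f3 f4 by (intro conjI)
  then show ?thesis by (rule exI)
qed

end
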